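(* Let $h>s>0$, $w_1,w_2>0$ and $t\in[0,w_2)$. Let $P_1$ be the flat surface with boundary obtained from the rectangle $[0,w_1]\times[0,h]$ by gluing $(x,h)\sim(x,0)$ for $x\in[0,w_1]$ and $(0,y)\sim(w_1,y)$ for $y\in[s,h]$, the segments $\{0\}\times[0,s]$ and $\{w_1\}\times[0,s]$ being left unglued (they form the slit). Let $P_2$ be obtained from $[0,w_2]\times[0,h]$ by gluing $(x,h)\sim(x+t \bmod w_2,\,0)$ for $x\in[0,w_2]$ and $(0,y)\sim(w_2,y)$ for $y\in[s,h]$, with $\{0\}\times[0,s]$ and $\{w_2\}\times[0,s]$ unglued. Suppose $\mathrm{Area}(P_1)\ge\mathrm{Area}(P_2)$, and that for every cylinder $L_1$ on $P_1$ there is a cylinder $L_2$ on $P_2$ of the same slope with $\frac{\mathrm{Area}(L_1)}{\mathrm{Area}(P_1)}=\frac{\mathrm{Area}(L_2)}{\mathrm{Area}(P_2)}$. Then $P_2$ is isometric to $P_1$.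
   Context: A cylinder on $P_i$ is a maximal open subset of the interior of $P_i$ isometric (by a translation-structure-preserving isometry) to a Euclidean cylinder $(\mathbb{R}/c\mathbb{Z})\times(0,\eta)$; its slope is the direction of its core curves. *)

theory Defs
  imports "HOL-Analysis.Analysis"
begin

text \<open>Gluing the rectangle [0,w] x [0,h] via (x,h) ~ (x+t mod w, 0) and
(0,y) ~ (w,y) (y in [s,h]) gives the flat torus C / lat w h t, where the lattice is
generated by w and (-t) + i h, cut open along the (image of the) vertical slit
{0} x [0,s].  The interior of P is therefore the torus minus the slit; we work with
its lift to C, a lattice-invariant open subset of C.\<close>

definition lat :: "real \<Rightarrow> real \<Rightarrow> real \<Rightarrow> complex set" where
  "lat w h t = {of_int m * complex_of_real w + of_int n * Complex (-t) h | m n. True}"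

definition slit_lift :: "real \<Rightarrow> real \<Rightarrow> real \<Rightarrow> real \<Rightarrow> complex set" where
  "slit_lift w h t s = {Complex 0 y + l | y l. 0 \<le> y \<and> y \<le> s \<and> l \<in> lat w h t}"

definition int_lift :: "real \<Rightarrow> real \<Rightarrow> real \<Rightarrow> real \<Rightarrow> complex set" where
  "int_lift w h t s = - slit_lift w h t s"

definition surf_area :: "real \<Rightarrow> real \<Rightarrow> real" where
  "surf_area w h = w * h"

text \<open>L (a lattice-invariant subset of C, i.e. a subset of the interior of P) is the
image of the Euclidean cylinder (R/cZ) x (0,eta) under the injective map
(u,v) \<mapsto> [b + (u + i v) * om], |om| = 1, which preserves the translation structure
up to the rotation by om.  The core curves have direction om (slope: om up to sign);
the area of L is c * eta.\<close>
definition cyl_param ::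
  "real \<Rightarrow> real \<Rightarrow> real \<Rightarrow> real \<Rightarrow> complex set \<Rightarrow> complex \<Rightarrow> real \<Rightarrow> real \<Rightarrow> bool" where
  "cyl_param w h t s L om c eta \<longleftrightarrow>
     (\<exists>b. 0 < c \<and> 0 < eta \<and> cmod om = 1 \<and>
        complex_of_real c * om \<in> lat w h t \<and>
        (\<forall>u v. 0 < v \<and> v < eta \<longrightarrow> b + Complex u v * om \<in> int_lift w h t s) \<and>
        (\<forall>u v u' v'. 0 < v \<and> v < eta \<and> 0 < v' \<and> v' < eta \<and>
            (b + Complex u v * om) - (b + Complex u' v' * om) \<in> lat w h t
            \<longrightarrow> v = v' \<and> (u - u') / c \<in> \<int>) \<and>
        L = {z. \<exists>u v. 0 < v \<and> v < eta \<and> z - (b + Complex u v * om) \<in> lat w h t})"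

definition is_cyl :: "real \<Rightarrow> real \<Rightarrow> real \<Rightarrow> real \<Rightarrow> complex set \<Rightarrow> bool" where
  "is_cyl w h t s L \<longleftrightarrow> (\<exists>om c eta. cyl_param w h t s L om c eta)"

definition cylinder ::
  "real \<Rightarrow> real \<Rightarrow> real \<Rightarrow> real \<Rightarrow> complex set \<Rightarrow> complex \<Rightarrow> real \<Rightarrow> real \<Rightarrow> bool" where
  "cylinder w h t s L om c eta \<longleftrightarrow>
     cyl_param w h t s L om c eta \<and> (\<forall>L'. is_cyl w h t s L' \<and> L \<subseteq> L' \<longrightarrow> L' = L)"

text \<open>P(w,h,t,s) is isometric to P(w',h',t',s'): there is a bijection between the
interiors (given by a lattice-equivariant map f on lifts) which is locally a
Euclidean isometry (a Riemannian isometry of the flat interiors; since P is the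
metric completion of its interior, this is the same as P being isometric to P').\<close>
definition flat_isometric ::
  "real \<Rightarrow> real \<Rightarrow> real \<Rightarrow> real \<Rightarrow> real \<Rightarrow> real \<Rightarrow> real \<Rightarrow> real \<Rightarrow> bool" where
  "flat_isometric w h t s w' h' t' s' \<longleftrightarrow>
     (\<exists>f :: complex \<Rightarrow> complex.
        (\<forall>z \<in> int_lift w h t s. f z \<in> int_lift w' h' t' s') \<and>
        (\<forall>z \<in> int_lift w h t s. \<forall>l \<in> lat w h t. f (z + l) - f z \<in> lat w' h' t') \<and>
        (\<forall>z \<in> int_lift w h t s. \<forall>z' \<in> int_lift w h t s.
            f z - f z' \<in> lat w' h' t' \<longrightarrow> z - z' \<in> lat w h t) \<and>
        (\<forall>y \<in> int_lift w' h' t' s'. \<exists>z \<in> int_lift w h t s. f z - y \<in> lat w' h' t') \<and>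
        (\<forall>z \<in> int_lift w h t s. \<exists>r > 0. ball z r \<subseteq> int_lift w h t s \<and>
            (\<forall>a \<in> ball z r. \<forall>b \<in> ball z r. dist (f a) (f b) = dist a b)))"

end

theory Submission
  imports Defs
begin

lemma lat_iff: "l \<in> lat w h t \<longleftrightarrow> (\<exists>(m::int) (n::int). l = Complex (of_int m*w - of_int n*t) (of_int n*h))"
  unfolding lat_def by (auto simp: complex_eq_iff)

lemma lat_add: "a \<in> lat w h t \<Longrightarrow> b \<in> lat w h t \<Longrightarrow> a + b \<in> lat w h t"
  unfolding lat_iff
proof (elim exE)
  fix m n m' n' :: int
  assume "a = Complex (of_int m*w - of_int n*t) (of_int n*h)" "b = Complex (of_int m'*w - of_int n'*t) (of_int n'*h)"
  then show "\<exists>(m::int) (n::int). a + b = Complex (of_int m*w - of_int n*t) (of_int n*h)"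
    by (intro exI[of _ "m+m'"] exI[of _ "n+n'"]) (simp add: complex_eq_iff algebra_simps)
qed

lemma lat_neg: "a \<in> lat w h t \<Longrightarrow> - a \<in> lat w h t"
  unfolding lat_iff
proof (elim exE)
  fix m n :: int
  assume "a = Complex (of_int m*w - of_int n*t) (of_int n*h)"
  then show "\<exists>(m::int) (n::int). - a = Complex (of_int m*w - of_int n*t) (of_int n*h)"
    by (intro exI[of _ "-m"] exI[of _ "-n"]) (simp add: complex_eq_iff algebra_simps)
qed

lemma lat_zero: "0 \<in> lat w h t"
  unfolding lat_iff by (intro exI[of _ 0]) (simp add: complex_eq_iff)

lemma lat_diff: "a \<in> lat w h t \<Longrightarrow> b \<in> lat w h t \<Longrightarrow> a - b \<in> lat w h t"
  using lat_add[of a w h t "-b"] lat_neg by fastforce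

lemma slit_add: "z \<in> slit_lift w h t s \<Longrightarrow> l \<in> lat w h t \<Longrightarrow> z + l \<in> slit_lift w h t s"
  unfolding slit_lift_def using lat_add by (force simp: add.assoc)

lemma int_add: "z \<in> int_lift w h t s \<Longrightarrow> l \<in> lat w h t \<Longrightarrow> z + l \<in> int_lift w h t s"
  unfolding int_lift_def using slit_add[of "z+l" w h t s "-l"] lat_neg by force

lemma slit_pt: "0 \<le> y \<Longrightarrow> y \<le> s \<Longrightarrow> l \<in> lat w h t \<Longrightarrow> Complex 0 y + l \<in> slit_lift w h t s"
  unfolding slit_lift_def by blast

lemma zero_notin_int: "0 \<le> s \<Longrightarrow> 0 \<notin> int_lift w h t s"
proof -
  assume "0 \<le> s"
  then have "Complex 0 0 + 0 \<in> slit_lift w h t s" using slit_pt[of 0 s 0 w h t] lat_zero by simp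
  moreover have "Complex 0 0 + 0 = (0::complex)" by (simp add: complex_eq_iff)
  ultimately show ?thesis unfolding int_lift_def by simp
qed

lemma decomp: "cmod om = 1 \<Longrightarrow> q = Complex (Re (q * cnj om)) (Im (q * cnj om)) * om"
proof -
  assume "cmod om = 1"
  then have "om * cnj om = 1" using complex_norm_square[of om] by simp
  then have "q * cnj om * om = q" by (metis mult.commute mult.left_neutral mult.assoc)
  moreover have "Complex (Re (q * cnj om)) (Im (q * cnj om)) = q * cnj om" by (rule complex_surj)
  ultimately show ?thesis by simp
qed

lemma perp_param: "cmod om = 1 \<Longrightarrow> Im (Complex u v * om * cnj om) = v"
proof -
  assume "cmod om = 1"
  then have "om * cnj om = 1" using complex_norm_square[of om] by simp
  then show ?thesis by (simp add: mult.assoc)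
qed

lemma cyl_line:
  assumes "cyl_param w h t s L om c eta" "z \<in> L"
  shows "z + of_real r * om \<in> L"
proof -
  from assms(1) obtain b where L: "L = {z. \<exists>u v. 0 < v \<and> v < eta \<and> z - (b + Complex u v * om) \<in> lat w h t}"
    unfolding cyl_param_def by blast
  from assms(2) L obtain u v where "0 < v" "v < eta" "z - (b + Complex u v * om) \<in> lat w h t" by blast
  moreover have "z + of_real r * om - (b + Complex (u+r) v * om) = z - (b + Complex u v * om)"
    by (simp add: complex_eq_iff algebra_simps)
  ultimately have "0 < v \<and> v < eta \<and> z + of_real r * om - (b + Complex (u+r) v * om) \<in> lat w h t" by metis
  then show ?thesis using L by blast
qed

lemma cyl_int:
  assumes "cyl_param w h t s L om c eta" "z \<in> L"
  shows "z \<in> int_lift w h t s"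
proof -
  from assms(1) obtain b where L: "L = {z. \<exists>u v. 0 < v \<and> v < eta \<and> z - (b + Complex u v * om) \<in> lat w h t}"
   and I: "\<forall>u v. 0 < v \<and> v < eta \<longrightarrow> b + Complex u v * om \<in> int_lift w h t s"
    unfolding cyl_param_def by blast
  from assms(2) L obtain u v where "0 < v" "v < eta" "z - (b + Complex u v * om) \<in> lat w h t" by blast
  then show ?thesis using I int_add[of "b + Complex u v * om" w h t s "z - (b + Complex u v * om)"] by auto
qed

lemma parallel:
  fixes a1 b1 a2 b2 :: real
  assumes "a1^2 + b1^2 = 1" "a2^2 + b2^2 = 1" "a1*b2 - a2*b1 = 0"
  shows "(a2 = a1 \<and> b2 = b1) \<or> (a2 = -a1 \<and> b2 = -b1)"
proof -
  define l where "l = a1*a2 + b1*b2"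
  have e1: "l*a1 - a2*(a1^2+b1^2) = b1*(a1*b2 - a2*b1)" by (simp add: l_def algebra_simps power2_eq_square)
  have e2: "l*b1 - b2*(a1^2+b1^2) = -a1*(a1*b2 - a2*b1)" by (simp add: l_def algebra_simps power2_eq_square)
  have 1: "a2 = l*a1" using e1 assms(1,3) by simp
  have 2: "b2 = l*b1" using e2 assms(1,3) by simp
  have "l^2*(a1^2+b1^2) = a2^2+b2^2" unfolding 1 2 by (simp add: algebra_simps power2_eq_square)
  then have "l^2 = 1" using assms(1,2) by simp
  then have "l = 1 \<or> l = -1" by (simp add: power2_eq_1_iff)
  then show ?thesis using 1 2 by auto
qed


definition c1 :: "real \<Rightarrow> real \<Rightarrow> real" where "c1 w h = sqrt (w^2 + h^2)"
definition om1 :: "real \<Rightarrow> real \<Rightarrow> complex" where "om1 w h = Complex (w / c1 w h) (h / c1 w h)"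
definition eta1 :: "real \<Rightarrow> real \<Rightarrow> real \<Rightarrow> real" where "eta1 w h s = (h - s) * w / c1 w h"
definition L1 :: "real \<Rightarrow> real \<Rightarrow> real \<Rightarrow> complex set" where
  "L1 w h s = {z. \<exists>u v. 0 < v \<and> v < eta1 w h s \<and> z - (Complex 0 s + Complex u v * om1 w h) \<in> lat w h 0}"

lemma c1_pos: "0 < w \<Longrightarrow> 0 < c1 w h"
  unfolding c1_def by (simp add: add_pos_nonneg)

lemma c1_sq: "(c1 w h)^2 = w^2 + h^2"
  unfolding c1_def by simp

lemma om1_norm: "0 < w \<Longrightarrow> cmod (om1 w h) = 1"
proof -
  assume w: "0 < w"
  have "(w / c1 w h)^2 + (h / c1 w h)^2 = 1"
    using c1_pos[OF w, of h] c1_sq[of w h] w by (simp add: power_divide add_divide_distrib[symmetric])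
  then show ?thesis unfolding om1_def cmod_def by simp
qed

lemma om1_Im: "0 < w \<Longrightarrow> Im (q * cnj (om1 w h)) = (Im q * w - Re q * h) / c1 w h"
  unfolding om1_def using c1_pos[of w h] by (simp add: field_simps)
lemma om1_Re: "0 < w \<Longrightarrow> Re (q * cnj (om1 w h)) = (Re q * w + Im q * h) / c1 w h"
  unfolding om1_def using c1_pos[of w h] by (simp add: field_simps)
lemma om1_mRe: "0 < w \<Longrightarrow> Re (Complex u v * om1 w h) = (u * w - v * h) / c1 w h"
  unfolding om1_def using c1_pos[of w h] by (simp add: field_simps)
lemma om1_mIm: "0 < w \<Longrightarrow> Im (Complex u v * om1 w h) = (u * h + v * w) / c1 w h"
  unfolding om1_def using c1_pos[of w h] by (simp add: field_simps)

lemma lat0_shift: "Complex (- of_int k * w) 0 \<in> lat w h 0"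
  unfolding lat_iff by (intro exI[of _ "-k"] exI[of _ 0]) simp

lemma line_in_L1:
  assumes w: "0 < w" and s: "0 < s" "s < h"
    and H: "\<forall>r. z + of_real r * om1 w h \<in> int_lift w h 0 s"
  shows "z \<in> L1 w h s"
proof -
  have c: "0 < c1 w h" using c1_pos[OF w] .
  have hp: "0 < h" using s by simp
  define Q where "Q = Im z - Re z * h / w"
  define k where "k = \<lfloor>(Q - s) / h\<rfloor>"
  define d where "d = Q - s - of_int k * h"
  have k1: "of_int k \<le> (Q - s) / h" "(Q - s) / h < of_int k + 1" unfolding k_def by linarith+
  have d0: "0 \<le> d" using k1(1) hp unfolding d_def by (simp add: field_simps)
  have d1: "d < h" using k1(2) hp unfolding d_def by (simp add: field_simps)
  show ?thesis
  proof (cases "0 < d \<and> d < h - s")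
    case True
    define l where "l = Complex (- of_int k * w) 0"
    have l: "l \<in> lat w h 0" unfolding l_def by (rule lat0_shift)
    define q where "q = z - Complex 0 s - l"
    define v where "v = Im (q * cnj (om1 w h))"
    define u where "u = Re (q * cnj (om1 w h))"
    have "v = w * d / c1 w h" unfolding v_def om1_Im[OF w] q_def l_def d_def Q_def using w c
      by (simp add: field_simps)
    then have v: "0 < v" "v < eta1 w h s" using True c w unfolding eta1_def
      by (simp_all add: divide_strict_right_mono)
    have "q = Complex u v * om1 w h" unfolding u_def v_def by (rule decomp[OF om1_norm[OF w]])
    then have "z - (Complex 0 s + Complex u v * om1 w h) = l" unfolding q_def by (simp add: algebra_simps)
    then show ?thesis unfolding L1_def using v l by auto
  next
    case False
    obtain y j where y: "0 \<le> y" "y \<le> s" and Qy: "Q = y + of_int j * h"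
    proof (cases "d = 0")
      case True then show ?thesis using that[of s k] s unfolding d_def by simp
    next
      case False
      then have "d \<ge> h - s" using \<open>\<not> (0 < d \<and> d < h - s)\<close> d0 by auto
      then show ?thesis using that[of "d - (h - s)" "k+1"] d1 unfolding d_def by (simp add: algebra_simps)
    qed
    define p where "p = Complex 0 y + Complex (- of_int j * w) 0"
    have p: "p \<in> slit_lift w h 0 s" unfolding p_def using slit_pt[OF y lat0_shift] .
    define q where "q = p - z"
    define r where "r = Re (q * cnj (om1 w h))"
    have I0: "Im (q * cnj (om1 w h)) = 0" unfolding om1_Im[OF w] q_def p_def
      using Qy w unfolding Q_def by (simp add: field_simps)
    have D: "q = Complex (Re (q*cnj (om1 w h))) (Im (q*cnj (om1 w h))) * om1 w h" by (rule decomp[OF om1_norm[OF w]])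
    have "q = Complex r 0 * om1 w h" unfolding r_def using D[unfolded I0] .
    then have "z + of_real r * om1 w h = p" unfolding q_def by (simp add: complex_of_real_def algebra_simps)
    then show ?thesis using H p unfolding int_lift_def by (metis ComplI Compl_iff)
  qed
qed


lemma c1om1: "0 < w \<Longrightarrow> complex_of_real (c1 w h) * om1 w h = Complex w h"
  unfolding om1_def using c1_pos[of w h] by (simp add: complex_eq_iff)

lemma L1_param:
  assumes w: "0 < w" and s: "0 < s" "s < h"
  shows "cyl_param w h 0 s (L1 w h s) (om1 w h) (c1 w h) (eta1 w h s)"
proof -
  let ?c = "c1 w h" and ?om = "om1 w h" and ?e = "eta1 w h s"
  have c: "0 < ?c" using c1_pos[OF w] .
  have csq: "?c * ?c = w*w + h*h" using c1_sq[of w h] by (simp add: power2_eq_square)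
  have e: "0 < ?e" unfolding eta1_def using s w c by simp
  have hp: "0 < h" using s by simp
  have lat1: "complex_of_real ?c * ?om \<in> lat w h 0" unfolding c1om1[OF w] lat_iff
    by (intro exI[of _ 1]) simp
  have avoid: "\<forall>u v. 0 < v \<and> v < ?e \<longrightarrow> Complex 0 s + Complex u v * ?om \<in> int_lift w h 0 s"
  proof (intro allI impI)
    fix u v assume v: "0 < v \<and> v < ?e"
    show "Complex 0 s + Complex u v * ?om \<in> int_lift w h 0 s"
    proof (rule ccontr)
      assume "Complex 0 s + Complex u v * ?om \<notin> int_lift w h 0 s"
      then have "Complex 0 s + Complex u v * ?om \<in> slit_lift w h 0 s" unfolding int_lift_def by simp
      then obtain y l where y: "0 \<le> y" "y \<le> s" and l: "l \<in> lat w h 0"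
        and eq: "Complex 0 s + Complex u v * ?om = Complex 0 y + l"
        unfolding slit_lift_def by blast
      from l obtain m n :: int where ln: "l = Complex (of_int m * w - of_int n * 0) (of_int n * h)"
        unfolding lat_iff by blast
      have re': "u * w - v * h = ?c * (m * w)" using arg_cong[OF eq, of Re] ln c by (simp add: om1_def field_simps)
      have im': "u * h + v * w = ?c * (y + n * h - s)" using arg_cong[OF eq, of Im] ln c by (simp add: om1_def field_simps)
      have "v * (w*w + h*h) = ?c * (w * (y - s + (n - m) * h))"
      proof -
        have "v * (w*w + h*h) = w * (u * h + v * w) - h * (u * w - v * h)" by (simp add: algebra_simps)
        also have "\<dots> = ?c * (w * (y - s + (n - m) * h))" unfolding re' im' by (simp add: algebra_simps)
        finally show ?thesis .
      qed
      then have "?c * (v * ?c) = ?c * (w * (y - s + (n - m) * h))" using csq by (simp add: algebra_simps)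
      then have vc: "v * ?c = w * (y - s + (n - m) * h)" using c by (metis mult_left_cancel order_less_irrefl)
      have "v * ?c < (h - s) * w" using v c unfolding eta1_def by (simp add: field_simps)
      then have A: "y - s + (n - m) * h < h - s" using vc w by (simp add: mult.commute)
      have "0 < v * ?c" using v c by simp
      then have B: "0 < y - s + (n - m) * h" using vc w by (simp add: zero_less_mult_iff)
      have "0 < real_of_int (n - m) * h" using B y by simp
      then have "0 < real_of_int (n - m)" using hp by (simp add: zero_less_mult_iff)
      then have "0 < n - m" by simp
      then have "1 \<le> n - m" by simp
      then have "1 \<le> real_of_int (n - m)" by simp
      then have "h \<le> real_of_int (n - m) * h" using hp by simp
      then show False using A y by simp
    qed
  qed
  have inj: "\<forall>u v u' v'. 0 < v \<and> v < ?e \<and> 0 < v' \<and> v' < ?e \<and>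
            (Complex 0 s + Complex u v * ?om) - (Complex 0 s + Complex u' v' * ?om) \<in> lat w h 0
            \<longrightarrow> v = v' \<and> (u - u') / ?c \<in> \<int>"
  proof (intro allI impI)
    fix u v u' v'
    assume H: "0 < v \<and> v < ?e \<and> 0 < v' \<and> v' < ?e \<and>
            (Complex 0 s + Complex u v * ?om) - (Complex 0 s + Complex u' v' * ?om) \<in> lat w h 0"
    define du where "du = u - u'"
    define dv where "dv = v - v'"
    have "(Complex 0 s + Complex u v * ?om) - (Complex 0 s + Complex u' v' * ?om) = Complex du dv * ?om"
      unfolding du_def dv_def by (simp add: complex_eq_iff algebra_simps)
    with H obtain m n :: int where eq: "Complex du dv * ?om = Complex (of_int m * w - of_int n * 0) (of_int n * h)"
      unfolding lat_iff by metis
    have re: "du * w - dv * h = ?c * (m * w)" using arg_cong[OF eq, of Re] c by (simp add: om1_def field_simps)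
    have im: "du * h + dv * w = ?c * (n * h)" using arg_cong[OF eq, of Im] c by (simp add: om1_def field_simps)
    have "dv * (w*w + h*h) = w * (du * h + dv * w) - h * (du * w - dv * h)" by (simp add: algebra_simps)
    also have "\<dots> = ?c * ((n - m) * w * h)" unfolding re im by (simp add: algebra_simps)
    finally have "?c * (dv * ?c) = ?c * ((n - m) * w * h)" using csq by (simp add: algebra_simps)
    then have dvc: "dv * ?c = (n - m) * w * h" using c by (metis mult_left_cancel order_less_irrefl)
    have "du * (w*w + h*h) = w * (du * w - dv * h) + h * (du * h + dv * w)" by (simp add: algebra_simps)
    also have "\<dots> = ?c * (m * w * w + n * h * h)" unfolding re im by (simp add: algebra_simps)
    finally have "?c * (du * ?c) = ?c * (m * w * w + n * h * h)" using csq by (simp add: algebra_simps)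
    then have duc: "du * ?c = m * w * w + n * h * h" using c by (metis mult_left_cancel order_less_irrefl)
    have "\<bar>dv\<bar> * ?c < (h - s) * w"
    proof -
      have "\<bar>dv\<bar> < ?e" unfolding dv_def using H by auto
      then show ?thesis using c unfolding eta1_def by (simp add: field_simps)
    qed
    also have "\<dots> < h * w" using s w by simp
    moreover have "\<bar>dv\<bar> * ?c = \<bar>real_of_int (n - m)\<bar> * (w * h)"
    proof -
      have "\<bar>dv\<bar> * ?c = \<bar>dv * ?c\<bar>" using c by (simp add: abs_mult)
      also have "\<dots> = \<bar>real_of_int (n - m)\<bar> * (w * h)" unfolding dvc using w s by (simp add: abs_mult)
      finally show ?thesis .
    qed
    ultimately have "\<bar>real_of_int (n - m)\<bar> * (w * h) < 1 * (w * h)" by (simp add: mult.commute)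
    then have "\<bar>real_of_int (n - m)\<bar> < 1" using w s by (simp add: mult_less_cancel_right)
    then have nm: "n = m" by linarith
    then have "dv = 0" using dvc c by simp
    moreover have "du / ?c = of_int m"
    proof -
      have "du * ?c = m * (?c * ?c)" using duc nm csq by (simp add: algebra_simps)
      then show ?thesis using c by (simp add: field_simps)
    qed
    ultimately show "v = v' \<and> (u - u') / ?c \<in> \<int>" unfolding dv_def du_def by simp
  qed
  show ?thesis unfolding cyl_param_def
    apply (rule exI[of _ "Complex 0 s"])
    unfolding L1_def using c e om1_norm[OF w] lat1 avoid inj by blast
qed


lemma L1_cyl:
  assumes w: "0 < w" and s: "0 < s" "s < h"
  shows "cylinder w h 0 s (L1 w h s) (om1 w h) (c1 w h) (eta1 w h s)"
  unfolding cylinder_def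
proof (intro conjI allI impI)
  show "cyl_param w h 0 s (L1 w h s) (om1 w h) (c1 w h) (eta1 w h s)" by (rule L1_param[OF w s])
  fix L' assume H: "is_cyl w h 0 s L' \<and> L1 w h s \<subseteq> L'"
  then obtain om c eta where P: "cyl_param w h 0 s L' om c eta" unfolding is_cyl_def by blast
  have nom: "cmod om = 1" using P unfolding cyl_param_def by blast
  have nom1: "cmod (om1 w h) = 1" by (rule om1_norm[OF w])
  have e: "0 < eta1 w h s" using L1_param[OF w s] unfolding cyl_param_def by blast
  have "L' \<subseteq> L1 w h s"
  proof
    fix z assume z: "z \<in> L'"
    define a1 where "a1 = Re (om1 w h)"
    define b1 where "b1 = Im (om1 w h)"
    define a2 where "a2 = Re om"
    define b2 where "b2 = Im om"
    define D where "D = a1 * b2 - a2 * b1"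
    show "z \<in> L1 w h s"
    proof (cases "D = 0")
      case True
      have "a1^2 + b1^2 = 1" using nom1 cmod_power2[of "om1 w h"] unfolding a1_def b1_def by simp
      moreover have "a2^2 + b2^2 = 1" using nom cmod_power2[of om] unfolding a2_def b2_def by simp
      ultimately have "(a2 = a1 \<and> b2 = b1) \<or> (a2 = -a1 \<and> b2 = -b1)" using parallel True unfolding D_def by blast
      then have om: "om = om1 w h \<or> om = - om1 w h" unfolding a1_def b1_def a2_def b2_def by (auto simp: complex_eq_iff)
      have "\<forall>r. z + of_real r * om1 w h \<in> int_lift w h 0 s"
      proof
        fix r
        from om show "z + of_real r * om1 w h \<in> int_lift w h 0 s"
        proof
          assume "om = om1 w h"
          then show ?thesis using cyl_int[OF P cyl_line[OF P z, of r]] by simp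
        next
          assume "om = - om1 w h"
          then show ?thesis using cyl_int[OF P cyl_line[OF P z, of "-r"]] by simp
        qed
      qed
      then show ?thesis by (rule line_in_L1[OF w s])
    next
      case False
      define q0 where "q0 = Complex 0 s + Complex 0 (eta1 w h s / 2) * om1 w h"
      define q1 where "q1 = Re q0"
      define q2 where "q2 = Im q0"
      define x where "x = (- q1 * b2 + q2 * a2) / D"
      define r where "r = (- q2 * a1 + q1 * b1) / D"
      define p where "p = Complex 0 s + Complex x (eta1 w h s / 2) * om1 w h"
      have "p - (Complex 0 s + Complex x (eta1 w h s / 2) * om1 w h) = 0" unfolding p_def by simp
      then have "p \<in> L1 w h s" unfolding L1_def using e lat_zero[of w h 0]
        by (intro CollectI exI[of _ x] exI[of _ "eta1 w h s / 2"]) simp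
      then have pL: "p \<in> L'" using H by blast
      have rp: "Re p = q1 + x * a1" unfolding p_def q1_def q0_def a1_def b1_def by simp
      have ip: "Im p = q2 + x * b1" unfolding p_def q2_def q0_def a1_def b1_def by simp
      have "Re p + r * a2 = 0" unfolding rp x_def r_def using False unfolding D_def
        by (simp add: field_simps; simp add: algebra_simps)
      moreover have "Im p + r * b2 = 0" unfolding ip x_def r_def using False unfolding D_def
        by (simp add: field_simps; simp add: algebra_simps)
      ultimately have "p + of_real r * om = 0" unfolding a2_def b2_def by (simp add: complex_eq_iff)
      then have "0 \<in> int_lift w h 0 s" using cyl_int[OF P cyl_line[OF P pL, of r]] by simp
      then show ?thesis using zero_notin_int[of s w h 0] s by simp
    qed
  qed
  then show "L' = L1 w h s" using H by blast
qed


lemma wrap_pos: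
  fixes a b W e s :: real
  assumes W: "0 < W" and e: "0 < e" and s: "0 < s" and b: "0 < b"
    and H: "\<forall>y. 0 \<le> y \<and> y \<le> s \<longrightarrow> (\<forall>k::int. \<not> (0 < a + b*y + of_int k * W \<and> a + b*y + of_int k * W < e))"
  shows "e + s*b \<le> W"
proof (rule ccontr)
  assume C: "\<not> e + s*b \<le> W"
  define L where "L = s*b"
  have L: "0 < L" unfolding L_def using s b by simp
  define j where "j = \<lfloor>a / W\<rfloor>"
  define rr where "rr = a - of_int j * W"
  have j1: "of_int j \<le> a / W" "a / W < of_int j + 1" unfolding j_def by linarith+
  have r0: "0 \<le> rr" using j1(1) W unfolding rr_def by (simp add: field_simps)
  have r1: "rr < W" using j1(2) W unfolding rr_def by (simp add: field_simps)
  consider "0 < rr \<and> rr < e" | "rr = 0" | "e \<le> rr" using r0 by linarith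
  then show False
  proof cases
    case 1
    then show False using H[rule_format, of 0 "-j"] s unfolding rr_def by simp
  next
    case 2
    define d where "d = min L e / 2"
    have d: "0 < d" "d < L" "d < e" unfolding d_def using L e by auto
    define y where "y = d / b"
    have y: "0 \<le> y" "y \<le> s" unfolding y_def using d b L_def
      by (simp_all add: field_simps)
    have "a + b*y + of_int (-j) * W = d" unfolding y_def using 2 b unfolding rr_def by simp
    then show False using H[rule_format, of y "-j"] y d by simp
  next
    case 3
    define d where "d = min e (L - (W - rr)) / 2"
    have pos: "0 < L - (W - rr)" using C 3 unfolding L_def by simp
    have d: "0 < d" "d < e" "d < L - (W - rr)" unfolding d_def using pos e by auto
    define y where "y = (W - rr + d) / b"
    have y: "0 \<le> y" "y \<le> s" unfolding y_def using d b L_def r1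
      by (simp_all add: field_simps)
    have byd: "b*y = W - rr + d" unfolding y_def using b by simp
    have "a + b*y + of_int (-j - 1) * W = d" unfolding byd unfolding rr_def by (simp add: algebra_simps)
    then show False using H[rule_format, of y "-j-1"] y d by simp
  qed
qed

lemma wrap_gen:
  fixes a b W e s :: real
  assumes W: "0 < W" and e: "0 < e" and s: "0 < s" and b: "b \<noteq> 0"
    and H: "\<forall>y. 0 \<le> y \<and> y \<le> s \<longrightarrow> (\<forall>k::int. \<not> (0 < a + b*y + of_int k * W \<and> a + b*y + of_int k * W < e))"
  shows "e + s*\<bar>b\<bar> \<le> W"
proof (cases "b > 0")
  case True
  then show ?thesis using wrap_pos[OF W e s True H] by simp
next
  case False
  then have nb: "0 < -b" using b by simp
  define a' where "a' = a + s * b"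
  define b' where "b' = -b"
  have nb': "0 < b'" using nb unfolding b'_def .
  have H': "\<forall>y. 0 \<le> y \<and> y \<le> s \<longrightarrow> (\<forall>k::int. \<not> (0 < a' + b'*y + of_int k * W \<and> a' + b'*y + of_int k * W < e))"
  proof (intro allI impI)
    fix y k assume y: "0 \<le> y \<and> y \<le> s"
    have "a' + b'*y = a + b * (s - y)" unfolding a'_def b'_def by (simp add: algebra_simps)
    then show "\<not> (0 < a' + b'*y + of_int k * W \<and> a' + b'*y + of_int k * W < e)"
      using H[rule_format, of "s - y" k] y by simp
  qed
  show ?thesis using wrap_pos[OF W e s nb' H'] False unfolding b'_def by simp
qed

lemma int_lift_open:
  assumes w: "0 < w" and h: "0 < h" and s: "0 \<le> s" "s < h"
  shows "open (int_lift w h 0 s)"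
proof -
  define A where "A = {z::complex. \<exists>k::int. of_int k * w < Re z \<and> Re z < of_int (k+1) * w}"
  define B where "B = {z::complex. \<exists>n::int. of_int n * h + s < Im z \<and> Im z < of_int (n+1) * h}"
  have oA: "open A" unfolding A_def
    by (intro open_Collect_ex open_Collect_conj open_Collect_less continuous_intros)
  have oB: "open B" unfolding B_def
    by (intro open_Collect_ex open_Collect_conj open_Collect_less continuous_intros)
  have "int_lift w h 0 s = A \<union> B"
  proof
    show "int_lift w h 0 s \<subseteq> A \<union> B"
    proof
      fix z assume z: "z \<in> int_lift w h 0 s"
      show "z \<in> A \<union> B"
      proof (rule ccontr)
        assume nz: "z \<notin> A \<union> B"
        define k where "k = \<lfloor>Re z / w\<rfloor>"
        have k1: "of_int k \<le> Re z / w" "Re z / w < of_int k + 1" unfolding k_def by linarith+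
        have "of_int k * w \<le> Re z" "Re z < of_int (k+1) * w" using k1 w by (simp_all add: field_simps)
        then have rk: "Re z = of_int k * w" using nz unfolding A_def by force
        define n where "n = \<lfloor>Im z / h\<rfloor>"
        have n1: "of_int n \<le> Im z / h" "Im z / h < of_int n + 1" unfolding n_def by linarith+
        have n2: "of_int n * h \<le> Im z" "Im z < of_int (n+1) * h" using n1 h by (simp_all add: field_simps)
        then have "Im z \<le> of_int n * h + s" using nz unfolding B_def by force
        then have "Complex 0 (Im z - of_int n * h) + Complex (of_int k * w - of_int n * 0) (of_int n * h) \<in> slit_lift w h 0 s"
          using n2 by (intro slit_pt) (auto simp: lat_iff)
        moreover have "Complex 0 (Im z - of_int n * h) + Complex (of_int k * w - of_int n * 0) (of_int n * h) = z"
          using rk by (simp add: complex_eq_iff)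
        ultimately show False using z unfolding int_lift_def by simp
      qed
    qed
  next
    show "A \<union> B \<subseteq> int_lift w h 0 s"
    proof
      fix z assume z: "z \<in> A \<union> B"
      show "z \<in> int_lift w h 0 s"
      proof (rule ccontr)
        assume "z \<notin> int_lift w h 0 s"
        then have "z \<in> slit_lift w h 0 s" unfolding int_lift_def by simp
        then obtain y l where y: "0 \<le> y" "y \<le> s" and l: "l \<in> lat w h 0" and zl: "z = Complex 0 y + l"
          unfolding slit_lift_def by blast
        from l obtain m n :: int where ln: "l = Complex (of_int m * w - of_int n * 0) (of_int n * h)"
          unfolding lat_iff by blast
        have re: "Re z = of_int m * w" and im: "Im z = y + of_int n * h" using zl ln by simp_all
        from z show False
        proof
          assume "z \<in> A"
          then have "\<exists>k::int. of_int k * w < of_int m * w \<and> of_int m * w < of_int (k+1) * w"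
            unfolding A_def using re by simp
          then obtain k :: int where "of_int k * w < of_int m * w" "of_int m * w < of_int (k+1) * w"
            by blast
          then have "k < m" "m < k + 1" using w by (simp_all add: mult_less_cancel_right)
          then show False by simp
        next
          assume "z \<in> B"
          then have "\<exists>n'::int. of_int n' * h + s < y + of_int n * h \<and> y + of_int n * h < of_int (n'+1) * h"
            unfolding B_def using im by simp
          then obtain n' :: int where a: "of_int n' * h + s < y + of_int n * h" and b: "y + of_int n * h < of_int (n'+1) * h"
            by blast
          have "real_of_int (n' - n) * h < 0" using a y by (simp add: algebra_simps)
          then have "real_of_int (n' - n) < 0" using h by (simp add: mult_less_0_iff)
          then have c1: "n' - n < 0" by simp
          have "0 < real_of_int (n' - n + 1) * h" using b y by (simp add: algebra_simps)
          then have "0 < real_of_int (n' - n + 1)" using h by (simp add: zero_less_mult_iff)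
          then have "0 < n' - n + 1" by simp
          then show False using c1 by simp
        qed
      qed
    qed
  qed
  then show ?thesis using oA oB open_Un by metis
qed

lemma iso_self:
  assumes w: "0 < w" and h: "0 < h" and s: "0 \<le> s" "s < h"
  shows "flat_isometric w h 0 s w h 0 s"
  unfolding flat_isometric_def
proof (intro exI[of _ "\<lambda>z. z"] conjI ballI impI)
  fix z assume z: "z \<in> int_lift w h 0 s"
  then obtain r where "r > 0" "ball z r \<subseteq> int_lift w h 0 s"
    using int_lift_open[OF w h s] open_contains_ball by blast
  then show "\<exists>r>0. ball z r \<subseteq> int_lift w h 0 s \<and> (\<forall>a\<in>ball z r. \<forall>b\<in>ball z r. dist a b = dist a b)" by blast
next
  fix y assume "y \<in> int_lift w h 0 s"
  then show "\<exists>z\<in>int_lift w h 0 s. z - y \<in> lat w h 0" using lat_zero by force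
qed auto


theorem lemma8p1:
  fixes h s w1 w2 t :: real
  assumes "0 < s" and "s < h" and "0 < w1" and "0 < w2" and "0 \<le> t" and "t < w2"
    and "surf_area w1 h \<ge> surf_area w2 h"
    and "\<forall>L1 om1 c1 eta1. cylinder w1 h 0 s L1 om1 c1 eta1 \<longrightarrow>
           (\<exists>L2 om2 c2 eta2. cylinder w2 h t s L2 om2 c2 eta2 \<and>
              (om2 = om1 \<or> om2 = - om1) \<and>
              c1 * eta1 / surf_area w1 h = c2 * eta2 / surf_area w2 h)"
  shows "flat_isometric w2 h t s w1 h 0 s"
proof -
  note s = assms(1,2) and w1 = assms(3) and w2 = assms(4) and t = assms(5,6)
  have hp: "0 < h" using s by simp
  have w21: "w2 \<le> w1" using assms(7) hp unfolding surf_area_def by (simp add: mult_le_cancel_right)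
  define C1 where "C1 = c1 w1 h"
  define O1 where "O1 = om1 w1 h"
  define E1 where "E1 = eta1 w1 h s"
  have C1: "0 < C1" unfolding C1_def using c1_pos[OF w1] .
  have "cylinder w1 h 0 s (L1 w1 h s) O1 C1 E1" unfolding O1_def C1_def E1_def by (rule L1_cyl[OF w1 s])
  from assms(8)[rule_format, OF this] obtain L2 om2 c2 eta2 where cyl2: "cylinder w2 h t s L2 om2 c2 eta2"
    and dir: "om2 = O1 \<or> om2 = - O1"
    and ar: "C1 * E1 / surf_area w1 h = c2 * eta2 / surf_area w2 h"
    by (elim exE conjE)
  from cyl2 have "cyl_param w2 h t s L2 om2 c2 eta2" unfolding cylinder_def by (elim conjE)
  then obtain b2 where c2: "0 < c2" and eta2: "0 < eta2" and nom2: "cmod om2 = 1"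
    and latc: "complex_of_real c2 * om2 \<in> lat w2 h t"
    and avoid2: "\<forall>u v. 0 < v \<and> v < eta2 \<longrightarrow> b2 + Complex u v * om2 \<in> int_lift w2 h t s"
    and inj2: "\<forall>u v u' v'. 0 < v \<and> v < eta2 \<and> 0 < v' \<and> v' < eta2 \<and>
            (b2 + Complex u v * om2) - (b2 + Complex u' v' * om2) \<in> lat w2 h t
            \<longrightarrow> v = v' \<and> (u - u') / c2 \<in> \<int>"
    unfolding cyl_param_def by (elim exE conjE)
  obtain \<sigma> :: real where sg: "\<sigma> = 1 \<or> \<sigma> = -1" and om2: "om2 = of_real \<sigma> * O1"
  proof (cases "om2 = O1")
    case True
    then show ?thesis using that[of 1] by simp
  next
    case False
    then have "om2 = - O1" using dir by simp
    then show ?thesis using that[of "-1"] by simp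
  qed
  define a where "a = Re om2"
  define bb where "bb = Im om2"
  have a: "a = \<sigma> * w1 / C1" unfolding a_def om2 O1_def om1_def C1_def by simp
  have bb: "bb = \<sigma> * h / C1" unfolding bb_def om2 O1_def om1_def C1_def by simp
  from latc obtain m0 n0 :: int where mn: "complex_of_real c2 * om2 = Complex (of_int m0 * w2 - of_int n0 * t) (of_int n0 * h)"
    unfolding lat_iff by blast
  have ca: "c2 * a = of_int m0 * w2 - of_int n0 * t" using arg_cong[OF mn, of Re] unfolding a_def by simp
  have cb: "c2 * bb = of_int n0 * h" using arg_cong[OF mn, of Im] unfolding bb_def by simp
  have n0: "of_int n0 = \<sigma> * c2 / C1" using cb hp C1 unfolding bb by (simp add: field_simps)
  have absn0: "\<bar>real_of_int n0\<bar> = c2 / C1" unfolding n0 using sg c2 C1 by auto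
  have n0ne: "n0 \<noteq> 0" using absn0 c2 C1 by auto
  have can: "c2 * a = of_int n0 * w1" unfolding a n0 using C1 by (simp add: field_simps)
  have g1: "gcd m0 n0 = 1"
  proof (rule ccontr)
    assume ng: "gcd m0 n0 \<noteq> 1"
    define g where "g = gcd m0 n0"
    have gp: "0 < g" unfolding g_def using n0ne by simp
    have g2: "2 \<le> g" using gp ng unfolding g_def by linarith
    obtain m' where m': "m0 = g * m'" unfolding g_def by (meson dvd_def gcd_dvd1)
    obtain n' where n': "n0 = g * n'" unfolding g_def by (meson dvd_def gcd_dvd2)
    define l0 where "l0 = Complex (of_int m' * w2 - of_int n' * t) (of_int n' * h)"
    have l0: "l0 \<in> lat w2 h t" unfolding l0_def lat_iff by blast
    have gr: "0 < real_of_int g" using gp by simp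
    have "complex_of_real c2 * om2 = of_real (of_int g) * l0" unfolding mn l0_def m' n'
      by (simp add: complex_eq_iff algebra_simps)
    then have l0e: "l0 = Complex (c2 / of_int g) 0 * om2" using gr
      by (simp add: complex_eq_iff field_simps)
    have "(b2 + Complex (c2 / of_int g) (eta2/2) * om2) - (b2 + Complex 0 (eta2/2) * om2) = l0"
      unfolding l0e by (simp add: complex_eq_iff algebra_simps)
    then have "(c2 / of_int g - 0) / c2 \<in> \<int>" using inj2[rule_format, of "eta2/2" "eta2/2" "c2 / of_int g" 0] eta2 l0 by simp
    then have "1 / real_of_int g \<in> \<int>" using c2 by simp
    then obtain k :: int where k: "1 / real_of_int g = of_int k" by (metis Ints_cases)
    have "0 < 1 / real_of_int g" "1 / real_of_int g < 1" using g2 by simp_all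
    then show False unfolding k by simp
  qed
  obtain u0 v0 :: int where bez: "u0 * m0 + v0 * n0 = 1" using bezout_int[of m0 n0] g1 by auto
  define ls where "ls = Complex (- of_int v0 * w2 - of_int u0 * t) (of_int u0 * h)"
  define W2 where "W2 = w2 * h / c2"
  have W2: "0 < W2" unfolding W2_def using w2 hp c2 by simp
  define P where "P = (\<lambda>z. Im z * a - Re z * bb)"
  have Pls: "P ls = W2"
  proof -
    have "c2 * P ls = of_int u0 * h * (c2 * a) - (- of_int v0 * w2 - of_int u0 * t) * (c2 * bb)"
      unfolding P_def ls_def by (simp add: algebra_simps)
    also have "\<dots> = w2 * h * of_int (u0 * m0 + v0 * n0)" unfolding ca cb by (simp add: algebra_simps)
    also have "\<dots> = w2 * h" using bez by simp
    finally show ?thesis unfolding W2_def using c2 by (simp add: field_simps)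
  qed
  have avoidP: "\<forall>y. 0 \<le> y \<and> y \<le> s \<longrightarrow> (\<forall>k::int. \<not> (0 < (- P b2) + a*y + of_int k * W2 \<and> (- P b2) + a*y + of_int k * W2 < eta2))"
  proof (intro allI impI notI)
    fix y k
    assume y: "0 \<le> y \<and> y \<le> s"
    assume H: "0 < (- P b2) + a*y + of_int k * W2 \<and> (- P b2) + a*y + of_int k * W2 < eta2"
    define q where "q = Complex 0 y + of_int k * ls - b2"
    have klat: "of_int k * ls \<in> lat w2 h t" unfolding ls_def lat_iff
      by (intro exI[of _ "- k * v0"] exI[of _ "k * u0"]) (simp add: complex_eq_iff algebra_simps)
    have Pq: "Im (q * cnj om2) = (- P b2) + a*y + of_int k * W2"
    proof -
      have "Im (q * cnj om2) = P q" unfolding P_def a_def bb_def by simp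
      also have "P q = P (Complex 0 y) + of_int k * P ls - P b2" unfolding P_def q_def by (simp add: algebra_simps)
      finally have X: "Im (q * cnj om2) = P (Complex 0 y) + of_int k * P ls - P b2" .
      have Py: "P (Complex 0 y) = a * y" unfolding P_def by simp
      show ?thesis unfolding X Pls Py by simp
    qed
    define uu where "uu = Re (q * cnj om2)"
    define vv where "vv = Im (q * cnj om2)"
    have "q = Complex uu vv * om2" unfolding uu_def vv_def by (rule decomp[OF nom2])
    then have eq: "b2 + Complex uu vv * om2 = Complex 0 y + of_int k * ls" unfolding q_def by (simp add: algebra_simps)
    have "b2 + Complex uu vv * om2 \<in> int_lift w2 h t s" using avoid2 H Pq unfolding vv_def by simp
    moreover have "Complex 0 y + of_int k * ls \<in> slit_lift w2 h t s" using slit_pt[of y s _ w2 h t] y klat by blast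
    ultimately show False using eq unfolding int_lift_def by simp
  qed
  have ane: "a \<noteq> 0" unfolding a using sg w1 C1 by auto
  have wr: "eta2 + s * \<bar>a\<bar> \<le> W2" by (rule wrap_gen[OF W2 eta2 s(1) ane avoidP])
  have absa: "\<bar>a\<bar> = w1 / C1" unfolding a using sg w1 C1 by auto
  have "c2 * eta2 + c2 * s * \<bar>a\<bar> \<le> w2 * h"
  proof -
    have "c2 * (eta2 + s * \<bar>a\<bar>) \<le> c2 * W2" using wr c2 by simp
    then show ?thesis unfolding W2_def using c2 by (simp add: algebra_simps)
  qed
  moreover have "c2 * s * \<bar>a\<bar> = \<bar>real_of_int n0\<bar> * s * w1"
  proof -
    have e: "c2 * \<bar>a\<bar> = \<bar>real_of_int n0\<bar> * w1" unfolding absa absn0 by simp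
    have "c2 * s * \<bar>a\<bar> = s * (c2 * \<bar>a\<bar>)" by (simp add: algebra_simps)
    also have "\<dots> = s * (\<bar>real_of_int n0\<bar> * w1)" unfolding e ..
    finally show ?thesis by (simp add: algebra_simps)
  qed
  ultimately have ineq: "c2 * eta2 + \<bar>real_of_int n0\<bar> * s * w1 \<le> w2 * h" by linarith
  have CE: "C1 * E1 = w1 * (h - s)" unfolding E1_def eta1_def C1_def using c1_pos[OF w1, of h] by simp
  have area: "c2 * eta2 = w2 * (h - s)"
  proof -
    have "w1 * (h - s) / (w1 * h) = c2 * eta2 / (w2 * h)" using ar unfolding CE surf_area_def .
    then have "(h * w1) * (c2 * eta2) = (h * w1) * (w2 * (h - s))" using w1 w2 hp
      by (simp add: field_simps)
    moreover have "h * w1 \<noteq> 0" using w1 hp by simp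
    ultimately show ?thesis by simp
  qed
  have "\<bar>real_of_int n0\<bar> * s * w1 \<le> w2 * s" using ineq area by (simp add: algebra_simps)
  then have n0w: "\<bar>real_of_int n0\<bar> * w1 \<le> w2" using s by (simp add: mult.commute mult.left_commute)
  have "1 \<le> \<bar>n0\<bar>" using n0ne by simp
  then have n01: "1 \<le> \<bar>real_of_int n0\<bar>" by linarith
  then have "w1 \<le> \<bar>real_of_int n0\<bar> * w1" using w1 by simp
  then have weq: "w2 = w1" using n0w w21 by simp
  have "\<bar>real_of_int n0\<bar> * w1 \<le> 1 * w1" using n0w weq by simp
  then have "\<bar>real_of_int n0\<bar> \<le> 1" using w1 by (simp add: mult_le_cancel_right)
  then have an0: "\<bar>real_of_int n0\<bar> = 1" using n01 by simp
  then have "real_of_int \<bar>n0\<bar> = 1" by simp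
  then have "\<bar>n0\<bar> = 1" by (simp only: of_int_eq_1_iff)
  then have n0sq: "n0 * n0 = 1" using abs_mult_self_eq[of n0] by simp
  have "of_int m0 * w2 - of_int n0 * t = of_int n0 * w2" using ca can weq by simp
  then have "of_int n0 * (of_int n0 * t) = of_int n0 * (of_int (m0 - n0) * w2)" by (simp add: algebra_simps)
  then have "of_int (n0 * n0) * t = of_int (n0 * (m0 - n0)) * w2" by (simp add: algebra_simps)
  then have tj: "t = of_int (n0 * (m0 - n0)) * w2" using n0sq by simp
  define j where "j = n0 * (m0 - n0)"
  have "0 \<le> of_int j * w2" "of_int j * w2 < 1 * w2" using t tj unfolding j_def by simp_all
  then have "0 \<le> real_of_int j" "real_of_int j < 1" using w2 by (simp_all add: zero_le_mult_iff mult_less_cancel_right)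
  then have "j = 0" by linarith
  then have t0: "t = 0" using tj unfolding j_def by simp
  show ?thesis unfolding weq t0 by (rule iso_self[OF w1 hp _ s(2)]) (use s in simp)
qed

end
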